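(* Let $f(t)=at^2+bt+c\in\mathbb{Z}[t]$ be irreducible over $\mathbb{Q}$ with $a\ne 0$, and let $\alpha$ be a root of $f$ in its splitting field. Then for any $k\in\mathbb{N}$ there exist integers $m,n,A,B$ with $A\ne 0$ and $\gcd(A,B)=1$ such that $(ma\alpha+n)^k=A\alpha+B$. *)

theory Defs
  imports "HOL-Computational_Algebra.Computational_Algebra"
begin

end

theory Submission
  imports Defs
begin

fun Qs :: "int \<Rightarrow> int \<Rightarrow> int \<Rightarrow> int \<Rightarrow> nat \<Rightarrow> int"
and Ps :: "int \<Rightarrow> int \<Rightarrow> int \<Rightarrow> int \<Rightarrow> nat \<Rightarrow> int" where
  "Qs b e m n 0 = 1"
| "Ps b e m n 0 = 0"
| "Qs b e m n (Suc k) = n * Qs b e m n k - e * m * Ps b e m n k"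
| "Ps b e m n (Suc k) = m * Qs b e m n k + (n - b*m) * Ps b e m n k"

lemma Q_mod: "m dvd Qs b e m 1 k - 1"
proof (induction k)
  case 0 then show ?case by simp
next
  case (Suc k)
  have eq: "Qs b e m 1 (Suc k) - 1 = (Qs b e m 1 k - 1) - m * (e * Ps b e m 1 k)" by simp
  show ?case unfolding eq by (rule dvd_diff[OF Suc dvd_triv_left])
qed

lemma P_rec: "Ps b e m n (Suc (Suc k)) = (2*n - b*m) * Ps b e m n (Suc k)
   - (n^2 - b*m*n + e*m^2) * Ps b e m n k"
  by (simp add: algebra_simps power2_eq_square)

lemma P_modN:
  assumes "p dvd (n^2 - b*m*n + e*m^2)"
  shows "p dvd Ps b e m n (Suc k) - (2*n - b*m)^k * m"
proof (induction k)
  case 0 then show ?case by simp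
next
  case (Suc k)
  let ?T = "2*n - b*m" and ?N = "n^2 - b*m*n + e*m^2"
  have eq: "Ps b e m n (Suc (Suc k)) - ?T^(Suc k) * m
     = ?T * (Ps b e m n (Suc k) - ?T^k * m) - ?N * Ps b e m n k"
    by (simp only: P_rec) (simp add: algebra_simps del: Ps.simps Qs.simps)
  show ?case unfolding eq
    by (rule dvd_diff[OF dvd_mult[OF Suc] dvd_mult2[OF assms]])
qed

lemma adj:
  "(n^2 - b*m*n + e*m^2) * Qs b e m n k = (n - b*m) * Qs b e m n (Suc k) + e*m * Ps b e m n (Suc k)"
  "(n^2 - b*m*n + e*m^2) * Ps b e m n k = - m * Qs b e m n (Suc k) + n * Ps b e m n (Suc k)"
  by (simp_all add: algebra_simps power2_eq_square)

lemma not_both: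
  assumes "prime p" "\<not> p dvd (n^2 - b*m*n + e*m^2)"
  shows "\<not> (p dvd Qs b e m n k \<and> p dvd Ps b e m n k)"
proof (induction k)
  case 0
  have "\<not> p dvd 1" using assms(1) not_prime_unit by blast
  then show ?case by simp
next
  case (Suc k)
  show ?case
  proof
    assume h: "p dvd Qs b e m n (Suc k) \<and> p dvd Ps b e m n (Suc k)"
    have h1: "p dvd Qs b e m n (Suc k)" and h2: "p dvd Ps b e m n (Suc k)" using h by blast+
    have "p dvd (n - b*m) * Qs b e m n (Suc k) + e*m * Ps b e m n (Suc k)"
      by (rule dvd_add[OF dvd_mult[OF h1] dvd_mult[OF h2]])
    then have d1: "p dvd (n^2 - b*m*n + e*m^2) * Qs b e m n k" by (simp only: adj)
    have "p dvd - m * Qs b e m n (Suc k) + n * Ps b e m n (Suc k)"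
      by (rule dvd_add[OF dvd_mult[OF h1] dvd_mult[OF h2]])
    then have d2: "p dvd (n^2 - b*m*n + e*m^2) * Ps b e m n k" by (simp only: adj)
    have "p dvd Qs b e m n k" using d1 assms prime_dvd_mult_iff by blast
    moreover have "p dvd Ps b e m n k" using d2 assms prime_dvd_mult_iff by blast
    ultimately show False using Suc by blast
  qed
qed

lemma bez_core:
  fixes a b c v x D E :: int
  assumes "D = -(b^2*E) - 4*a*c*(1+x)*(1-x)" "x = a*b*v*D"
  shows "2 = -2*a*b^3*v*E + (1 - 4*a^2*b*c*v*(1+x)) * (2 - 2*x)"
proof -
  have "x = a*b*v*(-(b^2*E) - 4*a*c*(1+x)*(1-x))"
    using assms(2) by (simp only: assms(1))
  then show ?thesis by algebra
qed

lemma bezout_id: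
  fixes a b c v :: int
  defines "D \<equiv> b^2 - 4*a*c"
  defines "m \<equiv> 2*a*(D*v)"
  shows "\<exists>r s. r * (1 - b*m + a*c*m^2) + s * (2 - b*m) = 1"
proof -
  define u where "u = D*v"
  define x where "x = a*b*u"
  define N where "N = 1 - b*m + a*c*m^2"
  define T where "T = 2 - b*m"
  have T: "T = 2 - 2*x" unfolding T_def m_def x_def u_def by simp
  have NE: "N - T = 4*a^3*c*u^2 - 1" unfolding N_def T_def m_def u_def
    by (simp add: algebra_simps power2_eq_square power3_eq_cube)
  have h1: "b^2 * (N - T) = 4*a*c*x^2 - b^2" unfolding NE x_def
    by (simp add: algebra_simps power2_eq_square power3_eq_cube)
  have h2: "D = -(b^2*(N-T)) - 4*a*c*(1+x)*(1-x)" unfolding h1 D_def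
    by (simp add: algebra_simps power2_eq_square)
  have h3: "x = a*b*v*D" unfolding x_def u_def by simp
  have "2 = -2*a*b^3*v*(N-T) + (1 - 4*a^2*b*c*v*(1+x)) * (2 - 2*x)"
    by (rule bez_core[OF h2 h3])
  then have h4: "2 = -2*a*b^3*v*N + (-2*a*b^3*v*(-1) + (1 - 4*a^2*b*c*v*(1+x))) * T"
    unfolding T by (simp add: algebra_simps)
  have h5: "N = 1 - 2*(x - 2*a^3*c*u^2)" unfolding N_def m_def x_def u_def
    by (simp add: algebra_simps power2_eq_square power3_eq_cube)
  define w where "w = x - 2*a^3*c*u^2"
  have "1 = N + w * 2" using h5 unfolding w_def by simp
  also have "\<dots> = N + w * (-2*a*b^3*v*N + (-2*a*b^3*v*(-1) + (1 - 4*a^2*b*c*v*(1+x))) * T)"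
    by (subst h4[symmetric]) (rule refl)
  also have "\<dots> = (1 + w*(-2*a*b^3*v)) * N + (w*(-2*a*b^3*v*(-1) + (1 - 4*a^2*b*c*v*(1+x)))) * T"
    by (simp add: algebra_simps)
  finally have "(1 + w*(-2*a*b^3*v)) * N + (w*(-2*a*b^3*v*(-1) + (1 - 4*a^2*b*c*v*(1+x)))) * T = 1" by simp
  then have "(1 + w*(-2*a*b^3*v)) * (1 - b*m + a*c*m^2) + (w*(-2*a*b^3*v*(-1) + (1 - 4*a^2*b*c*v*(1+x)))) * (2 - b*m) = 1"
    by (simp only: N_def T_def)
  then show ?thesis by (rule exI[where x="1 + w*(-2*a*b^3*v)", OF exI])
qed


lemma power_formula:
  fixes a b c m n :: int and \<alpha> :: "'a :: field_char_0"
  assumes r: "of_int a * \<alpha>^2 + of_int b * \<alpha> + of_int c = 0"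
  shows "(of_int m * of_int a * \<alpha> + of_int n) ^ k
      = of_int (a * Ps b (a*c) m n k) * \<alpha> + of_int (Qs b (a*c) m n k)"
proof (induction k)
  case 0 then show ?case by simp
next
  case (Suc k)
  let ?P = "of_int (Ps b (a*c) m n k) :: 'a" and ?Q = "of_int (Qs b (a*c) m n k) :: 'a"
  have r': "of_int a * \<alpha>^2 = - of_int b * \<alpha> - of_int c"
  proof -
    have "of_int a * \<alpha>^2 = (of_int a * \<alpha>^2 + of_int b * \<alpha> + of_int c) - of_int b * \<alpha> - of_int c"
      by (simp add: algebra_simps)
    then show ?thesis using r by simp
  qed
  have "(of_int m * of_int a * \<alpha> + of_int n) ^ Suc k
      = (of_int a * ?P * \<alpha> + ?Q) * (of_int m * of_int a * \<alpha> + of_int n)"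
    using Suc by (simp add: mult.commute)
  also have "\<dots> = of_int a * of_int m * ?P * (of_int a * \<alpha>^2) + (of_int a * ?P * of_int n + ?Q * of_int m * of_int a) * \<alpha> + ?Q * of_int n"
    by (simp add: algebra_simps power2_eq_square)
  also have "\<dots> = of_int (a * Ps b (a*c) m n (Suc k)) * \<alpha> + of_int (Qs b (a*c) m n (Suc k))"
    unfolding r' by (simp add: algebra_simps)
  finally show ?case .
qed

lemma irr_facts:
  fixes a b c :: int
  assumes a: "a \<noteq> 0" and irr: "irreducible (map_poly of_int [:c, b, a:] :: rat poly)"
  shows "c \<noteq> 0" "b^2 - 4*a*c \<noteq> 0"
proof -
  have mp: "(map_poly of_int [:c, b, a:] :: rat poly) = [:of_int c, of_int b, of_int a:]"
    by (simp add: map_poly_pCons)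
  show "c \<noteq> 0"
  proof
    assume c: "c = 0"
    have "(map_poly of_int [:c, b, a:] :: rat poly) = [:0, 1:] * [:of_int b, of_int a:]"
      unfolding c by (simp add: map_poly_pCons)
    from irreducibleD[OF irr this] have "is_unit ([:0, 1:] :: rat poly) \<or> is_unit [:of_int b, of_int a:: rat:]" .
    then show False using a by (auto simp: is_unit_iff_degree)
  qed
  show "b^2 - 4*a*c \<noteq> 0"
  proof
    assume D: "b^2 - 4*a*c = 0"
    have cc: "(of_int c :: rat) = of_int b ^ 2 / (4 * of_int a)"
    proof -
      have "(of_int (b^2) :: rat) = of_int (4*a*c)" using D by simp
      then show ?thesis using a by (simp add: field_simps)
    qed
    have e1: "(of_int b/(2*of_int a)) * (of_int b/2) = (of_int c::rat)"
      unfolding cc using a by (simp add: power2_eq_square)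
    have e2: "(of_int b/(2*of_int a)) * of_int a + of_int b/2 = (of_int b::rat)"
      using a by simp
    have gen: "\<And>p q r :: rat. [:p,1:] * [:q,r:] = [:p*q, p*r+q, r:]" by simp
    have "(map_poly of_int [:c, b, a:] :: rat poly) = [:of_int b / (2 * of_int a), 1:] * [:of_int b / 2, of_int a:]"
      unfolding mp gen e1 e2 ..
    from irreducibleD[OF irr this] have "is_unit [:of_int b / (2 * of_int a), 1::rat:] \<or> is_unit [:of_int b / 2, of_int a:: rat:]" .
    then show False using a by (auto simp: is_unit_iff_degree)
  qed
qed


lemma N_big:
  fixes a b c D v m :: int
  assumes "a \<noteq> 0" "c \<noteq> 0" "D \<noteq> 0" "v = \<bar>b\<bar> + 1" "m = 2*a*(D*v)"
  shows "\<bar>1 - b*m + a*c*m^2\<bar> > 1"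
proof -
  have "\<bar>a*D\<bar> \<ge> 1" using assms by (simp add: abs_mult) (metis abs_ge_self abs_mult abs_not_less_zero dual_order.trans int_one_le_iff_zero_less less_le mult_le_cancel_right1 mult_pos_pos zero_less_abs_iff)
  then have m1: "\<bar>m\<bar> \<ge> 2*\<bar>b\<bar> + 2"
  proof -
    have "\<bar>m\<bar> = 2 * \<bar>a*D\<bar> * v" using assms by (simp add: abs_mult)
    also have "\<dots> \<ge> 2 * 1 * v" using \<open>\<bar>a*D\<bar> \<ge> 1\<close> assms(4) by (intro mult_right_mono) auto
    finally show ?thesis using assms(4) by simp
  qed
  have ac: "\<bar>a*c\<bar> \<ge> 1" using assms by (simp add: abs_mult) (metis abs_ge_self abs_mult abs_not_less_zero dual_order.trans int_one_le_iff_zero_less less_le mult_le_cancel_right1 mult_pos_pos zero_less_abs_iff)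
  have "\<bar>a*c*m\<bar> \<ge> \<bar>m\<bar>"
  proof -
    have "\<bar>m\<bar> * 1 \<le> \<bar>m\<bar> * \<bar>a*c\<bar>" by (rule mult_left_mono[OF ac]) simp
    then show ?thesis by (simp add: abs_mult mult.commute)
  qed
  then have q: "\<bar>a*c*m - b\<bar> \<ge> 2" using m1 by linarith
  have "\<bar>m * (a*c*m - b)\<bar> \<ge> \<bar>m\<bar> * 2" unfolding abs_mult using q by (intro mult_left_mono) auto
  moreover have "1 - b*m + a*c*m^2 = 1 + m * (a*c*m - b)" by (simp add: algebra_simps power2_eq_square)
  ultimately show ?thesis using m1 by linarith
qed

theorem lemma4p1:
  fixes a b c :: int and \<alpha> :: "'a :: field_char_0" and k :: nat
  assumes "a \<noteq> 0"
    and "irreducible (map_poly of_int [:c, b, a:] :: rat poly)"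
    and "poly (map_poly of_int [:c, b, a:]) \<alpha> = 0"
    and "k \<ge> 1"
  shows "\<exists>m n A B :: int. A \<noteq> 0 \<and> gcd A B = 1 \<and>
           (of_int m * of_int a * \<alpha> + of_int n) ^ k = of_int A * \<alpha> + of_int B"
proof -
  note irr = irr_facts[OF assms(1,2)]
  define D where "D = b^2 - 4*a*c"
  define v where "v = \<bar>b\<bar> + 1"
  define m where "m = 2*a*(D*v)"
  define N where "N = 1 - b*m + a*c*m^2"
  define T where "T = 2 - b*m"
  obtain k' where k': "k = Suc k'" using assms(4) by (cases k) auto
  define P where "P = Ps b (a*c) m 1 k"
  define Q where "Q = Qs b (a*c) m 1 k"
  have r: "of_int a * \<alpha>^2 + of_int b * \<alpha> + of_int c = 0"
  proof -
    have "poly (map_poly of_int [:c, b, a:]) \<alpha> = of_int c + \<alpha> * (of_int b + \<alpha> * of_int a)"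
      by (simp add: map_poly_pCons)
    also have "\<dots> = of_int a * \<alpha>^2 + of_int b * \<alpha> + of_int c"
      by (simp add: algebra_simps power2_eq_square)
    finally show ?thesis using assms(3) by simp
  qed
  have eq: "(of_int m * of_int a * \<alpha> + of_int 1) ^ k = of_int (a*P) * \<alpha> + of_int Q"
    unfolding P_def Q_def by (rule power_formula[OF r])
  have "\<exists>r s. r * N + s * T = 1" unfolding N_def T_def m_def D_def by (rule bezout_id)
  then obtain r s where rs: "r * N + s * T = 1" by blast
  have Nbig: "\<bar>N\<bar> > 1" unfolding N_def
    by (rule N_big[OF assms(1) irr(1) irr(2)[folded D_def] v_def m_def])
  have Nm: "N = 1 + m * (a*c*m - b)" unfolding N_def by (simp add: algebra_simps power2_eq_square)
  have NN: "1^2 - b*m*1 + (a*c)*m^2 = N" unfolding N_def by simp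
  have Qm: "m dvd Q - 1" unfolding Q_def by (rule Q_mod)
  have am: "a dvd m" unfolding m_def by simp
  have pN: "\<not> p dvd m \<and> \<not> p dvd T \<and> \<not> p dvd P" if p: "prime p" "p dvd N" for p
  proof -
    have nm: "\<not> p dvd m"
    proof
      assume "p dvd m"
      then have "p dvd m * (a*c*m - b)" by (rule dvd_mult2)
      then have "p dvd N - m * (a*c*m - b)" using p(2) by (intro dvd_diff)
      then have "p dvd 1" using Nm by simp
      then show False using p(1) not_prime_unit by blast
    qed
    have nT: "\<not> p dvd T"
    proof
      assume "p dvd T"
      then have "p dvd r * N + s * T" using p(2) by (intro dvd_add dvd_mult)
      then have "p dvd 1" using rs by simp
      then show False using p(1) not_prime_unit by blast
    qed
    have "p dvd Ps b (a*c) m 1 (Suc k') - (2*1 - b*m)^k' * m"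
      by (rule P_modN) (use p(2) NN in simp)
    then have h: "p dvd P - T^k' * m" unfolding P_def k' T_def by simp
    have nd: "\<not> p dvd T^k' * m" using nm nT p(1) by (metis prime_dvd_mult_iff prime_dvd_power)
    have "\<not> p dvd P"
    proof
      assume "p dvd P"
      then have "p dvd P - (P - T^k' * m)" using h by (rule dvd_diff)
      then show False using nd by simp
    qed
    then show ?thesis using nm nT by simp
  qed
  have "N \<noteq> 0" "\<not> is_unit N" using Nbig by auto
  then obtain p0 where p0: "p0 dvd N" "prime p0" using prime_divisor_exists by blast
  have P0: "P \<noteq> 0" using pN[OF p0(2,1)] by auto
  have A0: "a * P \<noteq> 0" using P0 assms(1) by simp
  have gcd1: "gcd (a*P) Q = 1"
  proof (rule ccontr)
    assume ne: "gcd (a*P) Q \<noteq> 1"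
    have "gcd (a*P) Q \<noteq> 0" using A0 by simp
    moreover have "\<not> is_unit (gcd (a*P) Q)" using ne by simp
    ultimately obtain p where p: "p dvd gcd (a*P) Q" "prime p" using prime_divisor_exists by blast
    then have pA: "p dvd a*P" and pQ: "p dvd Q" by auto
    have npm: "\<not> p dvd m"
    proof
      assume "p dvd m"
      then have "p dvd Q - 1" using Qm by (rule dvd_trans)
      then have "p dvd Q - (Q - 1)" by (rule dvd_diff[OF pQ])
      then have "p dvd 1" by simp
      then show False using p(2) not_prime_unit by blast
    qed
    then have "\<not> p dvd a" using am by (metis dvd_trans)
    then have pP: "p dvd P" using pA p(2) by (simp add: prime_dvd_mult_iff)
    show False
    proof (cases "p dvd N")
      case True then show False using pN[OF p(2) True] pP by simp
    next
      case False
      have "\<not> (p dvd Qs b (a*c) m 1 k \<and> p dvd Ps b (a*c) m 1 k)"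
        by (rule not_both[OF p(2)]) (use False NN in simp)
      then show False using pP pQ unfolding P_def Q_def by simp
    qed
  qed
  have fin: "a*P \<noteq> 0 \<and> gcd (a*P) Q = 1 \<and>
     (of_int m * of_int a * \<alpha> + of_int 1) ^ k = of_int (a*P) * \<alpha> + of_int Q"
    using A0 gcd1 eq by (rule conjI[OF _ conjI])
  show ?thesis by (rule exI[of _ m], rule exI[of _ 1], rule exI[of _ "a*P"], rule exI[of _ Q], rule fin)
qed

end
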